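(* Let $X$ be a regular CW complex. Then for each $n\ge0$ the canonical map $\hat h_n:\coprod_{j\in J_n}\mathbb{D}^{n,m_n(j)}\to X^{(n)}$ is an induction onto a $D$-open subset of $X^{(n)}$.
   Context: An induction is an injective smooth map that is a diffeomorphism onto its image with the subset diffeology. $D$-topology: $O\subset Y$ is open iff $P^{-1}(O)$ is open for every plot $P$. Let $\ell(t)=0$ for $t\le0$, $e^{-1/t}$ for $t>0$; $\alpha_0=\int_0^1\ell(3x)\ell(3-3x)dx$; $\lambda(t)=\frac1{\alpha_0}\int_0^t\ell(3x)\ell(3-3x)dx$; $\phi(t)=\int_0^{1/2+t}\lambda(x)dx$. For integers $n,m\ge0$: $\mathbb{D}^{n,m}=\{(u,v)\in\mathbb{R}^n\times\mathbb{R}^m:\|u\|\ge1-\phi(2-\|u\|-\|v\|)\}$, $\mathbb{S}^{n-1,m}=\{(u,v):\|u\|\ge1\}$ (empty for $n=0$), with subset diffeologies. A fat CW complex is a diffeological space $X$ with subspaces $\emptyset=X^{(-1)}\subset X^{(0)}\subset\cdots$, index sets $J_n$, maps $m_n:J_n\to\mathbb{N}_0$ and smooth maps $h_n:\coprod_{j\in J_n}\mathbb{S}^{n-1,m_n(j)}\to X^{(n-1)}$ such that each $X^{(n)}$ is the pushout in diffeological spaces of the inclusion $i_n:\coprod_j\mathbb{S}^{n-1,m_n(j)}\hookrightarrow\coprod_j\mathbb{D}^{n,m_n(j)}$ and $h_n$ (with induced map $\hat h_n:\coprod_j\mathbb{D}^{n,m_n(j)}\to X^{(n)}$), and $X$ is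 the diffeological colimit of the $X^{(n)}$. It is regular (a regular CW complex) if every $h_n$ is an induction whose image is $D$-open in $X^{(n-1)}$. *)

theory Defs
  imports "HOL-Analysis.Analysis"
begin

text \<open>R^n is represented as the functions nat => real vanishing from index n on.\<close>

definition Esp :: "nat \<Rightarrow> (nat \<Rightarrow> real) set" where
  "Esp n = {x. \<forall>i\<ge>n. x i = 0}"

definition Enorm :: "nat \<Rightarrow> (nat \<Rightarrow> real) \<Rightarrow> real" where
  "Enorm n x = sqrt (\<Sum>i<n. (x i)\<^sup>2)"

definition Edist :: "nat \<Rightarrow> (nat \<Rightarrow> real) \<Rightarrow> (nat \<Rightarrow> real) \<Rightarrow> real" where
  "Edist n x y = Enorm n (\<lambda>i. x i - y i)"

definition Eopen :: "nat \<Rightarrow> (nat \<Rightarrow> real) set \<Rightarrow> bool" where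
  "Eopen n U \<longleftrightarrow> U \<subseteq> Esp n \<and>
     (\<forall>x\<in>U. \<exists>e>0. \<forall>y\<in>Esp n. Edist n x y < e \<longrightarrow> y \<in> U)"

definition Econt :: "nat \<Rightarrow> (nat \<Rightarrow> real) set \<Rightarrow> ((nat \<Rightarrow> real) \<Rightarrow> real) \<Rightarrow> bool" where
  "Econt n U g \<longleftrightarrow>
     (\<forall>x\<in>U. \<forall>e>0. \<exists>d>0. \<forall>y\<in>U. Edist n x y < d \<longrightarrow> \<bar>g y - g x\<bar> < e)"

inductive_set Epartials :: "nat \<Rightarrow> (nat \<Rightarrow> real) set \<Rightarrow> ((nat \<Rightarrow> real) \<Rightarrow> real)
    \<Rightarrow> ((nat \<Rightarrow> real) \<Rightarrow> real) set"
  for n U g where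
  base: "g \<in> Epartials n U g"
| step: "h \<in> Epartials n U g \<Longrightarrow> i < n \<Longrightarrow>
         (\<forall>x\<in>U. ((\<lambda>t. h (x(i := x i + t))) has_real_derivative h' x) (at 0)) \<Longrightarrow>
         h' \<in> Epartials n U g"

definition Esmooth :: "nat \<Rightarrow> (nat \<Rightarrow> real) set \<Rightarrow> ((nat \<Rightarrow> real) \<Rightarrow> real) \<Rightarrow> bool" where
  "Esmooth n U g \<longleftrightarrow>
     (\<forall>h\<in>Epartials n U g. Econt n U h \<and>
        (\<forall>i<n. \<forall>x\<in>U. \<exists>d. ((\<lambda>t. h (x(i := x i + t))) has_real_derivative d) (at 0)))"

definition Esmooth_map :: "nat \<Rightarrow> (nat \<Rightarrow> real) set \<Rightarrow> nat
    \<Rightarrow> ((nat \<Rightarrow> real) \<Rightarrow> (nat \<Rightarrow> real)) \<Rightarrow> bool" where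
  "Esmooth_map l U k F \<longleftrightarrow> (\<forall>x\<in>U. F x \<in> Esp k) \<and> (\<forall>i<k. Esmooth l U (\<lambda>x. F x i))"

text \<open>A parametrization (k, U, P): U open in R^k, P : U -> X (stored extensionally).\<close>
type_synonym 'a param = "nat \<times> (nat \<Rightarrow> real) set \<times> ((nat \<Rightarrow> real) \<Rightarrow> 'a)"
type_synonym 'a dspace = "'a set \<times> 'a param set"

abbreviation carrier :: "'a dspace \<Rightarrow> 'a set" where "carrier S \<equiv> fst S"

definition plot :: "'a dspace \<Rightarrow> nat \<Rightarrow> (nat \<Rightarrow> real) set \<Rightarrow> ((nat \<Rightarrow> real) \<Rightarrow> 'a) \<Rightarrow> bool" where
  "plot S k U P \<longleftrightarrow> (k, U, restrict P U) \<in> snd S"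

definition diffeology :: "'a dspace \<Rightarrow> bool" where
  "diffeology S \<longleftrightarrow>
     (\<forall>(k, U, P)\<in>snd S. Eopen k U \<and> P \<in> U \<rightarrow>\<^sub>E carrier S)
   \<and> (\<forall>k U x. Eopen k U \<and> x \<in> carrier S \<longrightarrow> plot S k U (\<lambda>_. x))
   \<and> (\<forall>k U P. Eopen k U \<and> P ` U \<subseteq> carrier S \<and>
        (\<forall>r\<in>U. \<exists>V. Eopen k V \<and> r \<in> V \<and> V \<subseteq> U \<and> plot S k V P) \<longrightarrow> plot S k U P)
   \<and> (\<forall>k U P l V F. plot S k U P \<and> Eopen l V \<and> Esmooth_map l V k F \<and> F ` V \<subseteq> U
        \<longrightarrow> plot S l V (P \<circ> F))"

definition smooth :: "'a dspace \<Rightarrow> 'b dspace \<Rightarrow> ('a \<Rightarrow> 'b) \<Rightarrow> bool" where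
  "smooth S T f \<longleftrightarrow> f \<in> carrier S \<rightarrow> carrier T \<and>
     (\<forall>k U P. plot S k U P \<longrightarrow> plot T k U (f \<circ> P))"

definition subspace :: "'a dspace \<Rightarrow> 'a set \<Rightarrow> 'a dspace" where
  "subspace T A = (A, {(k, U, P) \<in> snd T. P ` U \<subseteq> A})"

definition diffeomorphism :: "'a dspace \<Rightarrow> 'b dspace \<Rightarrow> ('a \<Rightarrow> 'b) \<Rightarrow> bool" where
  "diffeomorphism S T f \<longleftrightarrow> bij_betw f (carrier S) (carrier T) \<and> smooth S T f
     \<and> smooth T S (inv_into (carrier S) f)"

definition induction :: "'a dspace \<Rightarrow> 'b dspace \<Rightarrow> ('a \<Rightarrow> 'b) \<Rightarrow> bool" where
  "induction S T f \<longleftrightarrow> inj_on f (carrier S) \<and> smooth S T f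
     \<and> diffeomorphism S (subspace T (f ` carrier S)) f"

definition D_open :: "'a dspace \<Rightarrow> 'a set \<Rightarrow> bool" where
  "D_open S W \<longleftrightarrow> W \<subseteq> carrier S \<and>
     (\<forall>k U P. plot S k U P \<longrightarrow> Eopen k {x \<in> U. P x \<in> W})"

definition empty_dspace :: "'a dspace" where
  "empty_dspace = ({}, {(k, {}, \<lambda>_. undefined) | k. True})"

definition RR :: "nat \<Rightarrow> nat \<Rightarrow> ((nat \<Rightarrow> real) \<times> (nat \<Rightarrow> real)) dspace" where
  "RR n m = (Esp n \<times> Esp m,
     {(k, U, P). Eopen k U \<and> P \<in> U \<rightarrow>\<^sub>E Esp n \<times> Esp m \<and>
        Esmooth_map k U n (fst \<circ> P) \<and> Esmooth_map k U m (snd \<circ> P)})"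

definition dsum :: "'j set \<Rightarrow> ('j \<Rightarrow> 'b dspace) \<Rightarrow> ('j \<times> 'b) dspace" where
  "dsum J S = (Sigma J (\<lambda>j. carrier (S j)),
     {(k, U, P). Eopen k U \<and> P \<in> U \<rightarrow>\<^sub>E Sigma J (\<lambda>j. carrier (S j)) \<and>
        (\<forall>r\<in>U. \<exists>V j Q. Eopen k V \<and> r \<in> V \<and> V \<subseteq> U \<and> j \<in> J \<and> plot (S j) k V Q \<and>
            (\<forall>x\<in>V. P x = (j, Q x)))})"

definition ell :: "real \<Rightarrow> real" where
  "ell t = (if t \<le> 0 then 0 else exp (- 1 / t))"

definition oint :: "(real \<Rightarrow> real) \<Rightarrow> real \<Rightarrow> real" where
  "oint f t = (if 0 \<le> t then integral {0..t} f else - integral {t..0} f)"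

definition alpha0 :: real where
  "alpha0 = integral {0..1} (\<lambda>x. ell (3 * x) * ell (3 - 3 * x))"

definition lam :: "real \<Rightarrow> real" where
  "lam t = oint (\<lambda>x. ell (3 * x) * ell (3 - 3 * x)) t / alpha0"

definition phi :: "real \<Rightarrow> real" where
  "phi t = oint lam (1 / 2 + t)"

text \<open>D^{n,m} and S^{n-1,m} (the latter is written fat_sphere n m) with subset diffeologies.\<close>
definition fat_disk :: "nat \<Rightarrow> nat \<Rightarrow> ((nat \<Rightarrow> real) \<times> (nat \<Rightarrow> real)) dspace" where
  "fat_disk n m = subspace (RR n m)
     {(u, v) \<in> Esp n \<times> Esp m. Enorm n u \<ge> 1 - phi (2 - Enorm n u - Enorm m v)}"

definition fat_sphere :: "nat \<Rightarrow> nat \<Rightarrow> ((nat \<Rightarrow> real) \<times> (nat \<Rightarrow> real)) dspace" where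
  "fat_sphere n m = subspace (RR n m) {(u, v) \<in> Esp n \<times> Esp m. Enorm n u \<ge> 1}"

text \<open>P is the pushout (in diffeological spaces) of the inclusion carrier A into carrier C
  and h : A -> B, with legs the inclusion B into P and hh : C -> P.
  This is the standard construction: quotient of the sum B + C with quotient diffeology.\<close>
definition is_pushout :: "'c dspace \<Rightarrow> 'a dspace \<Rightarrow> 'c dspace \<Rightarrow> 'a dspace
    \<Rightarrow> ('c \<Rightarrow> 'a) \<Rightarrow> ('c \<Rightarrow> 'a) \<Rightarrow> bool" where
  "is_pushout A B C P h hh \<longleftrightarrow>
     carrier A \<subseteq> carrier C \<and> carrier B \<subseteq> carrier P \<and>
     hh \<in> carrier C \<rightarrow> carrier P \<and>
     (\<forall>a\<in>carrier A. hh a = h a) \<and>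
     carrier P = carrier B \<union> hh ` carrier C \<and>
     (\<forall>c\<in>carrier C - carrier A. \<forall>c'\<in>carrier C. hh c = hh c' \<longrightarrow> c = c') \<and>
     (\<forall>c\<in>carrier C - carrier A. hh c \<notin> carrier B) \<and>
     snd P = {(k, U, Q). Eopen k U \<and> Q \<in> U \<rightarrow>\<^sub>E carrier P \<and>
        (\<forall>r\<in>U. \<exists>V. Eopen k V \<and> r \<in> V \<and> V \<subseteq> U \<and>
           ((\<exists>Q'. plot B k V Q' \<and> (\<forall>x\<in>V. Q x = Q' x)) \<or>
            (\<exists>Q'. plot C k V Q' \<and> (\<forall>x\<in>V. Q x = hh (Q' x)))))}"

definition is_colimit :: "(nat \<Rightarrow> 'a dspace) \<Rightarrow> 'a dspace \<Rightarrow> bool" where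
  "is_colimit sk X \<longleftrightarrow>
     carrier X = (\<Union>n. carrier (sk n)) \<and>
     snd X = {(k, U, Q). Eopen k U \<and> Q \<in> U \<rightarrow>\<^sub>E carrier X \<and>
        (\<forall>r\<in>U. \<exists>V n Q'. Eopen k V \<and> r \<in> V \<and> V \<subseteq> U \<and> plot (sk n) k V Q' \<and>
            (\<forall>x\<in>V. Q x = Q' x))}"

text \<open>sk n is X^(n); the (n-1)-skeleton is prev_skel sk n, with X^(-1) empty.\<close>
definition prev_skel :: "(nat \<Rightarrow> 'a dspace) \<Rightarrow> nat \<Rightarrow> 'a dspace" where
  "prev_skel sk n = (if n = 0 then empty_dspace else sk (n - 1))"

definition cells_disk :: "(nat \<Rightarrow> 'j set) \<Rightarrow> (nat \<Rightarrow> 'j \<Rightarrow> nat) \<Rightarrow> nat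
    \<Rightarrow> ('j \<times> (nat \<Rightarrow> real) \<times> (nat \<Rightarrow> real)) dspace" where
  "cells_disk J m n = dsum (J n) (\<lambda>j. fat_disk n (m n j))"

definition cells_sphere :: "(nat \<Rightarrow> 'j set) \<Rightarrow> (nat \<Rightarrow> 'j \<Rightarrow> nat) \<Rightarrow> nat
    \<Rightarrow> ('j \<times> (nat \<Rightarrow> real) \<times> (nat \<Rightarrow> real)) dspace" where
  "cells_sphere J m n = dsum (J n) (\<lambda>j. fat_sphere n (m n j))"

definition fat_CW :: "'a dspace \<Rightarrow> (nat \<Rightarrow> 'a dspace) \<Rightarrow> (nat \<Rightarrow> 'j set) \<Rightarrow> (nat \<Rightarrow> 'j \<Rightarrow> nat)
    \<Rightarrow> (nat \<Rightarrow> 'j \<times> (nat \<Rightarrow> real) \<times> (nat \<Rightarrow> real) \<Rightarrow> 'a)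
    \<Rightarrow> (nat \<Rightarrow> 'j \<times> (nat \<Rightarrow> real) \<times> (nat \<Rightarrow> real) \<Rightarrow> 'a) \<Rightarrow> bool" where
  "fat_CW X sk J m h hh \<longleftrightarrow>
     diffeology X \<and> (\<forall>n. diffeology (sk n)) \<and>
     (\<forall>n. smooth (cells_sphere J m n) (prev_skel sk n) (h n)) \<and>
     (\<forall>n. is_pushout (cells_sphere J m n) (prev_skel sk n) (cells_disk J m n) (sk n) (h n) (hh n)) \<and>
     is_colimit sk X"

definition regular_CW :: "'a dspace \<Rightarrow> (nat \<Rightarrow> 'a dspace) \<Rightarrow> (nat \<Rightarrow> 'j set) \<Rightarrow> (nat \<Rightarrow> 'j \<Rightarrow> nat)
    \<Rightarrow> (nat \<Rightarrow> 'j \<times> (nat \<Rightarrow> real) \<times> (nat \<Rightarrow> real) \<Rightarrow> 'a)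
    \<Rightarrow> (nat \<Rightarrow> 'j \<times> (nat \<Rightarrow> real) \<times> (nat \<Rightarrow> real) \<Rightarrow> 'a) \<Rightarrow> bool" where
  "regular_CW X sk J m h hh \<longleftrightarrow> fat_CW X sk J m h hh \<and>
     (\<forall>n. induction (cells_sphere J m n) (prev_skel sk n) (h n) \<and>
          D_open (prev_skel sk n) (h n ` carrier (cells_sphere J m n)))"

end

theory Submission
  imports Defs
begin

lemma plot_cong:
  assumes "\<And>x. x \<in> U \<Longrightarrow> P x = P' x"
  shows "plot S k U P = plot S k U P'"
proof -
  have "restrict P U = restrict P' U" using assms by (intro restrict_ext) auto
  thus ?thesis unfolding plot_def by simp
qed

lemma plot_subspace:
  "plot (subspace T A) k U Q \<longleftrightarrow> plot T k U Q \<and> Q ` U \<subseteq> A"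
  unfolding plot_def subspace_def by auto

lemma carrier_subspace[simp]: "carrier (subspace T A) = A"
  unfolding subspace_def by simp

lemma plotP_iff:
  assumes "is_pushout A B C P h hh"
  shows "plot P k U Q \<longleftrightarrow> Eopen k U \<and> restrict Q U \<in> U \<rightarrow>\<^sub>E carrier P \<and>
        (\<forall>r\<in>U. \<exists>V. Eopen k V \<and> r \<in> V \<and> V \<subseteq> U \<and>
           ((\<exists>Q'. plot B k V Q' \<and> (\<forall>x\<in>V. Q x = Q' x)) \<or>
            (\<exists>Q'. plot C k V Q' \<and> (\<forall>x\<in>V. Q x = hh (Q' x)))))"
proof -
  have "snd P = {(k, U, Q). Eopen k U \<and> Q \<in> U \<rightarrow>\<^sub>E carrier P \<and>
        (\<forall>r\<in>U. \<exists>V. Eopen k V \<and> r \<in> V \<and> V \<subseteq> U \<and>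
           ((\<exists>Q'. plot B k V Q' \<and> (\<forall>x\<in>V. Q x = Q' x)) \<or>
            (\<exists>Q'. plot C k V Q' \<and> (\<forall>x\<in>V. Q x = hh (Q' x)))))}"
    using assms unfolding is_pushout_def by blast
  moreover have eq: "\<And>V Z. V \<subseteq> U \<Longrightarrow> (\<forall>x\<in>V. restrict Q U x = Z x) \<longleftrightarrow> (\<forall>x\<in>V. Q x = Z x)" by auto
  ultimately show ?thesis unfolding plot_def by (simp add: eq cong: conj_cong)
qed

lemma main:
  assumes po: "is_pushout A B C P h hh"
  and ind: "induction A B h" and dop: "D_open B (h ` carrier A)"
  and AC: "\<And>k U Q. plot A k U Q \<Longrightarrow> plot C k U Q"
  and Cloc: "\<And>k U R. Eopen k U \<Longrightarrow> R ` U \<subseteq> carrier C \<Longrightarrow>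
      (\<And>r. r\<in>U \<Longrightarrow> \<exists>V. Eopen k V \<and> r\<in>V \<and> V\<subseteq>U \<and> plot C k V R) \<Longrightarrow> plot C k U R"
  and Cval: "\<And>k U R. plot C k U R \<Longrightarrow> Eopen k U \<and> R ` U \<subseteq> carrier C"
  and Bval: "\<And>k U R. plot B k U R \<Longrightarrow> R ` U \<subseteq> carrier B"
  shows "induction C P hh \<and> D_open P (hh ` carrier C)"
proof -
  have pf: "carrier A \<subseteq> carrier C \<and> carrier B \<subseteq> carrier P \<and>
     hh \<in> carrier C \<rightarrow> carrier P \<and>
     (\<forall>a\<in>carrier A. hh a = h a) \<and>
     carrier P = carrier B \<union> hh ` carrier C \<and>
     (\<forall>c\<in>carrier C - carrier A. \<forall>c'\<in>carrier C. hh c = hh c' \<longrightarrow> c = c') \<and>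
     (\<forall>c\<in>carrier C - carrier A. hh c \<notin> carrier B)"
    using po unfolding is_pushout_def by (elim conjE) (intro conjI; assumption)
  have AsubC: "carrier A \<subseteq> carrier C" and hhP: "hh \<in> carrier C \<rightarrow> carrier P"
    and hhA: "\<And>a. a \<in> carrier A \<Longrightarrow> hh a = h a"
    and carP: "carrier P = carrier B \<union> hh ` carrier C"
    and injout: "\<And>c c'. c \<in> carrier C - carrier A \<Longrightarrow> c' \<in> carrier C \<Longrightarrow> hh c = hh c' \<Longrightarrow> c = c'"
    and notB: "\<And>c. c \<in> carrier C - carrier A \<Longrightarrow> hh c \<notin> carrier B"
    using pf by blast+
  have injh: "inj_on h (carrier A)" and smh: "smooth A B h"
    and dh: "diffeomorphism A (subspace B (h ` carrier A)) h"
    using ind unfolding induction_def by auto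
  have hAB: "h \<in> carrier A \<rightarrow> carrier B" using smh unfolding smooth_def by auto
  have injhh: "inj_on hh (carrier C)"
  proof (rule inj_onI)
    fix c c' assume c: "c \<in> carrier C" "c' \<in> carrier C" "hh c = hh c'"
    show "c = c'"
    proof (cases "c \<in> carrier A")
      case True
      show ?thesis
      proof (cases "c' \<in> carrier A")
        case True
        with \<open>c \<in> carrier A\<close> c hhA injh show ?thesis by (metis inj_onD)
      next
        case False
        with c injout show ?thesis by (metis DiffI)
      qed
    next
      case False
      with c injout show ?thesis by blast
    qed
  qed
  have key: "\<And>y. y \<in> carrier B \<Longrightarrow> y \<in> hh ` carrier C \<Longrightarrow> y \<in> h ` carrier A"
  proof -
    fix y assume y: "y \<in> carrier B" "y \<in> hh ` carrier C"
    then obtain c where c: "c \<in> carrier C" "y = hh c" by auto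
    show "y \<in> h ` carrier A"
    proof (cases "c \<in> carrier A")
      case True thus ?thesis using c hhA by auto
    next
      case False thus ?thesis using c y notB by blast
    qed
  qed
  have hinv: "smooth (subspace B (h ` carrier A)) A (inv_into (carrier A) h)"
    using dh unfolding diffeomorphism_def by auto
  define g where "g = inv_into (carrier C) hh"
  have smC: "smooth C P hh"
    unfolding smooth_def
  proof (intro conjI allI impI)
    show "hh \<in> carrier C \<rightarrow> carrier P" by (fact hhP)
    fix k U R assume R: "plot C k U R"
    from Cval[OF R] have U: "Eopen k U" and RU: "R ` U \<subseteq> carrier C" by auto
    show "plot P k U (hh \<circ> R)"
      unfolding plotP_iff[OF po]
    proof (intro conjI)
      show "Eopen k U" by fact
      show "restrict (hh \<circ> R) U \<in> U \<rightarrow>\<^sub>E carrier P" using RU hhP by (force simp: PiE_iff Pi_iff)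
      show "\<forall>r\<in>U. \<exists>V. Eopen k V \<and> r \<in> V \<and> V \<subseteq> U \<and>
           ((\<exists>Q'. plot B k V Q' \<and> (\<forall>x\<in>V. (hh \<circ> R) x = Q' x)) \<or>
            (\<exists>Q'. plot C k V Q' \<and> (\<forall>x\<in>V. (hh \<circ> R) x = hh (Q' x))))"
        using U R by auto
    qed
  qed
  have smS: "smooth C (subspace P (hh ` carrier C)) hh"
    using smC unfolding smooth_def plot_subspace carrier_subspace
    by (auto dest!: Cval)
  have smI: "smooth (subspace P (hh ` carrier C)) C g"
    unfolding smooth_def carrier_subspace
  proof (intro conjI allI impI)
    show "g \<in> hh ` carrier C \<rightarrow> carrier C" unfolding g_def by (auto intro: inv_into_into)
    fix k U Q assume "plot (subspace P (hh ` carrier C)) k U Q"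
    hence Q: "plot P k U Q" and QU: "Q ` U \<subseteq> hh ` carrier C" unfolding plot_subspace by auto
    note QQ = Q[unfolded plotP_iff[OF po]]
    show "plot C k U (g \<circ> Q)"
    proof (rule Cloc)
      show "Eopen k U" using QQ by auto
      show "(g \<circ> Q) ` U \<subseteq> carrier C" using QU unfolding g_def by (auto intro!: inv_into_into)
      fix r assume "r \<in> U"
      then obtain V where V: "Eopen k V" "r \<in> V" "V \<subseteq> U" and
        br: "(\<exists>Q'. plot B k V Q' \<and> (\<forall>x\<in>V. Q x = Q' x)) \<or>
            (\<exists>Q'. plot C k V Q' \<and> (\<forall>x\<in>V. Q x = hh (Q' x)))"
        using QQ by blast
      have "plot C k V (g \<circ> Q)"
        using br
      proof
        assume "\<exists>Q'. plot B k V Q' \<and> (\<forall>x\<in>V. Q x = Q' x)"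
        then obtain Q' where Q': "plot B k V Q'" "\<forall>x\<in>V. Q x = Q' x" by blast
        have im: "Q' ` V \<subseteq> h ` carrier A"
        proof
          fix y assume "y \<in> Q' ` V"
          then obtain x where x: "x \<in> V" "y = Q' x" by auto
          have "y \<in> carrier B" using Bval[OF Q'(1)] x by auto
          moreover have "y \<in> hh ` carrier C" using QU V(3) x Q'(2) by force
          ultimately show "y \<in> h ` carrier A" by (rule key)
        qed
        have "plot (subspace B (h ` carrier A)) k V Q'"
          unfolding plot_subspace using Q' im by auto
        hence "plot A k V (inv_into (carrier A) h \<circ> Q')"
          using hinv unfolding smooth_def by auto
        hence pc: "plot C k V (inv_into (carrier A) h \<circ> Q')" by (rule AC)
        show "plot C k V (g \<circ> Q)"
        proof (subst plot_cong)
          fix x assume x: "x \<in> V"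
          then obtain a where a: "a \<in> carrier A" "Q' x = h a" using im by auto
          have "g (Q x) = a" unfolding g_def using Q'(2) x a hhA AsubC injhh
            by (metis inv_into_f_f subsetD)
          moreover have "inv_into (carrier A) h (Q' x) = a" using a injh by simp
          ultimately show "(g \<circ> Q) x = (inv_into (carrier A) h \<circ> Q') x" by simp
        qed (rule pc)
      next
        assume "\<exists>Q'. plot C k V Q' \<and> (\<forall>x\<in>V. Q x = hh (Q' x))"
        then obtain Q' where Q': "plot C k V Q'" "\<forall>x\<in>V. Q x = hh (Q' x)" by blast
        have "Q' ` V \<subseteq> carrier C" using Cval[OF Q'(1)] by auto
        show "plot C k V (g \<circ> Q)"
        proof (subst plot_cong)
          fix x assume x: "x \<in> V"
          show "(g \<circ> Q) x = Q' x" using Q'(2) x \<open>Q' ` V \<subseteq> carrier C\<close> injhh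
            unfolding g_def by auto
        qed (rule Q'(1))
      qed
      thus "\<exists>V. Eopen k V \<and> r \<in> V \<and> V \<subseteq> U \<and> plot C k V (g \<circ> Q)" using V by blast
    qed
  qed
  have indC: "induction C P hh"
    unfolding induction_def diffeomorphism_def carrier_subspace
    using injhh smC smS smI inj_on_imp_bij_betw[OF injhh] unfolding g_def by blast
  have dopC: "D_open P (hh ` carrier C)"
    unfolding D_open_def
  proof (intro conjI allI impI)
    show "hh ` carrier C \<subseteq> carrier P" using carP by auto
    fix k U Q assume "plot P k U Q"
    note QQ = this[unfolded plotP_iff[OF po]]
    have UE: "U \<subseteq> Esp k" using QQ unfolding Eopen_def by auto
    show "Eopen k {x \<in> U. Q x \<in> hh ` carrier C}"
      unfolding Eopen_def
    proof (intro conjI ballI)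
      show "{x \<in> U. Q x \<in> hh ` carrier C} \<subseteq> Esp k" using UE by auto
      fix x assume x: "x \<in> {x \<in> U. Q x \<in> hh ` carrier C}"
      then obtain V where V: "Eopen k V" "x \<in> V" "V \<subseteq> U" and
        br: "(\<exists>Q'. plot B k V Q' \<and> (\<forall>x\<in>V. Q x = Q' x)) \<or>
            (\<exists>Q'. plot C k V Q' \<and> (\<forall>x\<in>V. Q x = hh (Q' x)))"
        using QQ by blast
      show "\<exists>e>0. \<forall>y\<in>Esp k. Edist k x y < e \<longrightarrow> y \<in> {x \<in> U. Q x \<in> hh ` carrier C}"
        using br
      proof
        assume "\<exists>Q'. plot B k V Q' \<and> (\<forall>x\<in>V. Q x = Q' x)"
        then obtain Q' where Q': "plot B k V Q'" "\<forall>x\<in>V. Q x = Q' x" by blast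
        have W: "Eopen k {y \<in> V. Q' y \<in> h ` carrier A}"
          using dop Q'(1) unfolding D_open_def by blast
        have "Q' x \<in> carrier B" using Bval[OF Q'(1)] V by auto
        moreover have "Q' x \<in> hh ` carrier C" using x V Q'(2) by auto
        ultimately have "x \<in> {y \<in> V. Q' y \<in> h ` carrier A}" using key V by auto
        then obtain e where e: "e > 0" "\<forall>y\<in>Esp k. Edist k x y < e \<longrightarrow> y \<in> {y \<in> V. Q' y \<in> h ` carrier A}"
          using W unfolding Eopen_def by blast
        have "\<forall>y\<in>Esp k. Edist k x y < e \<longrightarrow> y \<in> {x \<in> U. Q x \<in> hh ` carrier C}"
        proof (intro ballI impI)
          fix y assume "y \<in> Esp k" "Edist k x y < e"
          with e have y: "y \<in> V" "Q' y \<in> h ` carrier A" by auto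
          then obtain a where "a \<in> carrier A" "Q' y = h a" by auto
          hence "Q y \<in> hh ` carrier C" using Q'(2) y hhA AsubC by force
          thus "y \<in> {x \<in> U. Q x \<in> hh ` carrier C}" using y V by auto
        qed
        thus ?thesis using e by blast
      next
        assume "\<exists>Q'. plot C k V Q' \<and> (\<forall>x\<in>V. Q x = hh (Q' x))"
        then obtain Q' where Q': "plot C k V Q'" "\<forall>x\<in>V. Q x = hh (Q' x)" by blast
        have Q'V: "Q' ` V \<subseteq> carrier C" using Cval[OF Q'(1)] by auto
        obtain e where e: "e > 0" "\<forall>y\<in>Esp k. Edist k x y < e \<longrightarrow> y \<in> V"
          using V unfolding Eopen_def by blast
        have "\<forall>y\<in>Esp k. Edist k x y < e \<longrightarrow> y \<in> {x \<in> U. Q x \<in> hh ` carrier C}"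
          using e Q'V Q'(2) V by force
        thus ?thesis using e by blast
      qed
    qed
  qed
  show ?thesis using indC dopC by blast
qed

lemma plot_dsum:
  "plot (dsum J S) k U R \<longleftrightarrow> Eopen k U \<and> restrict R U \<in> U \<rightarrow>\<^sub>E Sigma J (\<lambda>j. carrier (S j)) \<and>
        (\<forall>r\<in>U. \<exists>V j Q. Eopen k V \<and> r \<in> V \<and> V \<subseteq> U \<and> j \<in> J \<and> plot (S j) k V Q \<and>
            (\<forall>x\<in>V. R x = (j, Q x)))"
proof -
  have eq: "\<And>V Z. V \<subseteq> U \<Longrightarrow> (\<forall>x\<in>V. restrict R U x = Z x) \<longleftrightarrow> (\<forall>x\<in>V. R x = Z x)" by auto
  have eq2: "\<And>V (A::_\<Rightarrow>bool) B. V \<subseteq> U \<Longrightarrow> (\<forall>x\<in>V. (x \<in> U \<longrightarrow> A x) \<and> (x \<notin> U \<longrightarrow> B x)) \<longleftrightarrow> (\<forall>x\<in>V. A x)" by auto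
  show ?thesis unfolding plot_def dsum_def by (simp add: eq eq2 cong: conj_cong)
qed

lemma carrier_dsum: "carrier (dsum J S) = Sigma J (\<lambda>j. carrier (S j))"
  unfolding dsum_def by simp

lemma dsum_val: "plot (dsum J S) k U R \<Longrightarrow> Eopen k U \<and> R ` U \<subseteq> carrier (dsum J S)"
  unfolding plot_dsum carrier_dsum by (auto simp: PiE_iff)

lemma dsum_loc:
  assumes "Eopen k U" "R ` U \<subseteq> carrier (dsum J S)"
    "\<And>r. r\<in>U \<Longrightarrow> \<exists>V. Eopen k V \<and> r\<in>V \<and> V\<subseteq>U \<and> plot (dsum J S) k V R"
  shows "plot (dsum J S) k U R"
  unfolding plot_dsum
proof (intro conjI ballI)
  show "Eopen k U" by fact
  show "restrict R U \<in> U \<rightarrow>\<^sub>E Sigma J (\<lambda>j. carrier (S j))"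
    using assms(2) unfolding carrier_dsum by auto
  fix r assume r: "r \<in> U"
  then obtain V where V: "Eopen k V" "r\<in>V" "V\<subseteq>U" "plot (dsum J S) k V R" using assms(3) by blast
  then obtain V' j Q where "Eopen k V'" "r \<in> V'" "V' \<subseteq> V" "j \<in> J" "plot (S j) k V' Q"
     "\<forall>x\<in>V'. R x = (j, Q x)" unfolding plot_dsum by blast
  thus "\<exists>V j Q. Eopen k V \<and> r \<in> V \<and> V \<subseteq> U \<and> j \<in> J \<and> plot (S j) k V Q \<and> (\<forall>x\<in>V. R x = (j, Q x))"
    using V by blast
qed

lemma sphere_disk:
  assumes sub: "carrier (cells_sphere J m n) \<subseteq> carrier (cells_disk J m n)"
    and p: "plot (cells_sphere J m n) k U Q"
  shows "plot (cells_disk J m n) k U Q"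
proof -
  note pp = p[unfolded cells_sphere_def plot_dsum]
  show ?thesis unfolding cells_disk_def plot_dsum
  proof (intro conjI ballI)
    show "Eopen k U" using pp by auto
    show "restrict Q U \<in> U \<rightarrow>\<^sub>E (SIGMA j:J n. carrier (fat_disk n (m n j)))"
      using pp sub unfolding cells_sphere_def cells_disk_def carrier_dsum by blast
    fix r assume "r \<in> U"
    then obtain V j Q' where V: "Eopen k V" "r \<in> V" "V \<subseteq> U" "j \<in> J n"
      "plot (fat_sphere n (m n j)) k V Q'" "\<forall>x\<in>V. Q x = (j, Q' x)" using pp by blast
    have "plot (fat_disk n (m n j)) k V Q'"
    proof -
      have "Q' ` V \<subseteq> carrier (fat_sphere n (m n j))"
        using V(5) unfolding fat_sphere_def plot_subspace by auto
      hence "Q' ` V \<subseteq> carrier (fat_disk n (m n j))"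
        using sub V(4) unfolding cells_sphere_def cells_disk_def carrier_dsum by blast
      thus ?thesis using V(5) unfolding fat_sphere_def fat_disk_def plot_subspace carrier_subspace
        by auto
    qed
    thus "\<exists>V j Q'. Eopen k V \<and> r \<in> V \<and> V \<subseteq> U \<and> j \<in> J n \<and> plot (fat_disk n (m n j)) k V Q' \<and>
        (\<forall>x\<in>V. Q x = (j, Q' x))" using V by blast
  qed
qed

lemma diffeology_val: "diffeology S \<Longrightarrow> plot S k U R \<Longrightarrow> R ` U \<subseteq> carrier S"
  unfolding diffeology_def plot_def by (fastforce simp: PiE_iff)

lemma empty_val: "plot empty_dspace k U R \<Longrightarrow> R ` U \<subseteq> carrier empty_dspace"
  unfolding empty_dspace_def plot_def by auto

theorem proposition7p2:
  fixes X :: "'a dspace" and sk :: "nat \<Rightarrow> 'a dspace"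
    and J :: "nat \<Rightarrow> 'j set" and m :: "nat \<Rightarrow> 'j \<Rightarrow> nat"
    and h hh :: "nat \<Rightarrow> 'j \<times> (nat \<Rightarrow> real) \<times> (nat \<Rightarrow> real) \<Rightarrow> 'a"
  assumes "regular_CW X sk J m h hh"
  shows "\<forall>n. induction (cells_disk J m n) (sk n) (hh n) \<and>
             D_open (sk n) (hh n ` carrier (cells_disk J m n))"
proof
  fix n
  have po: "is_pushout (cells_sphere J m n) (prev_skel sk n) (cells_disk J m n) (sk n) (h n) (hh n)"
    and ind: "induction (cells_sphere J m n) (prev_skel sk n) (h n)"
    and dop: "D_open (prev_skel sk n) (h n ` carrier (cells_sphere J m n))"
    and dif: "\<And>n. diffeology (sk n)"
    using assms unfolding regular_CW_def fat_CW_def by auto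
  have sub: "carrier (cells_sphere J m n) \<subseteq> carrier (cells_disk J m n)"
    using po unfolding is_pushout_def by (rule conjunct1)
  have Bval: "R ` U \<subseteq> carrier (prev_skel sk n)" if pl: "plot (prev_skel sk n) k U R" for k U R
  proof (cases "n = 0")
    case True
    hence "plot empty_dspace k U R" using pl by (simp add: prev_skel_def)
    hence "R ` U \<subseteq> carrier empty_dspace" by (rule empty_val)
    thus ?thesis using True by (simp add: prev_skel_def)
  next
    case False
    hence "plot (sk (n - 1)) k U R" using pl by (simp add: prev_skel_def)
    hence "R ` U \<subseteq> carrier (sk (n - 1))" by (rule diffeology_val[OF dif])
    thus ?thesis using False by (simp add: prev_skel_def)
  qed
  have AC: "\<And>k U Q. plot (cells_sphere J m n) k U Q \<Longrightarrow> plot (cells_disk J m n) k U Q"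
    by (rule sphere_disk[OF sub])
  have Cloc: "\<And>k U R. Eopen k U \<Longrightarrow> R ` U \<subseteq> carrier (cells_disk J m n) \<Longrightarrow>
      (\<And>r. r\<in>U \<Longrightarrow> \<exists>V. Eopen k V \<and> r\<in>V \<and> V\<subseteq>U \<and> plot (cells_disk J m n) k V R) \<Longrightarrow>
      plot (cells_disk J m n) k U R"
    unfolding cells_disk_def by (rule dsum_loc)
  have Cval: "\<And>k U R. plot (cells_disk J m n) k U R \<Longrightarrow> Eopen k U \<and> R ` U \<subseteq> carrier (cells_disk J m n)"
    unfolding cells_disk_def by (rule dsum_val)
  show "induction (cells_disk J m n) (sk n) (hh n) \<and>
             D_open (sk n) (hh n ` carrier (cells_disk J m n))"
    by (rule main[OF po ind dop AC Cloc Cval Bval])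
qed

end
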